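(* The matrix $$f(z,w)=\begin{pmatrix} 1+zw & z^2 \\ -w^2 & 1-zw \end{pmatrix} \in \mathrm{SL}_2(\mathbb{C}[z,w])$$ (which is known not to be factorizable as a product of elementary matrices with polynomial entries) can be factorized as a product of $4$ elementary (unipotent upper/lower triangular) matrices with continuous entries on $\mathbb{C}^2$, and as a product of $5$ elementary matrices with holomorphic entries on $\mathbb{C}^2$. Both numbers are minimal in the respective ring (continuous functions, resp. holomorphic functions on $\mathbb{C}^2$). Moreover, any factorization $$f=\begin{pmatrix} 1 & h_1 \\ 0 & 1 \end{pmatrix}\begin{pmatrix} 1 & 0 \\ h_2 & 1 \end{pmatrix}\begin{pmatrix} 1 & h_3 \\ 0 & 1 \end{pmatrix}\begin{pmatrix} 1 & 0 \\ h_4 & 1 \end{pmatrix}$$ by $4$ continuous elementary matrices has to meet the singularity set of the corresponding fibration over $\mathbb{C}^2$, i.e. there is a point of $\mathbb{C}^2$ where $h_2=h_3=0$.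
   Context: For $N\ge 4$ the map $\Phi_N\colon\mathbb{C}^N\to\mathrm{SL}_2(\mathbb{C})$ sending $(z_1,\dots,z_N)$ to the product of $N$ alternating elementary matrices with off-diagonal entries $z_1,\dots,z_N$ is a surjective holomorphic map which is submersive exactly outside the set $S_N=\{(z_1,0,\dots,0,z_N)\}$ (all middle variables zero). A factorization of $f\colon\mathbb{C}^2\to\mathrm{SL}_2(\mathbb{C})$ into $N$ elementary factors corresponds to a section of the pull-back fibration $f^*\Phi_N=\{(x,z)\in\mathbb{C}^2\times\mathbb{C}^N : f(x)=\Phi_N(z)\}\to\mathbb{C}^2$; the singularity set is the part lying over $S_N$. *)

theory Defs
  imports "HOL-Analysis.Analysis"
begin

text \<open>2x2 complex matrices are rendered as complex^2^2 (rows first).\<close>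

definition upper_el :: "complex \<Rightarrow> complex^2^2" where
  "upper_el t = vector [vector [1, t], vector [0, 1]]"

definition lower_el :: "complex \<Rightarrow> complex^2^2" where
  "lower_el t = vector [vector [1, 0], vector [t, 1]]"

fun elprod :: "bool \<Rightarrow> complex list \<Rightarrow> complex^2^2" where
  "elprod b [] = mat 1"
| "elprod b (t # ts) = (if b then upper_el t else lower_el t) ** elprod (\<not> b) ts"

definition fmat :: "complex \<times> complex \<Rightarrow> complex^2^2" where
  "fmat p = (case p of (z, w) \<Rightarrow>
     vector [vector [1 + z*w, z^2], vector [- (w^2), 1 - z*w]])"

text \<open>Holomorphic functions on C^2: continuous and holomorphic in each variable
  separately (Osgood).\<close>
definition holomorphic_C2 :: "(complex \<times> complex \<Rightarrow> complex) \<Rightarrow> bool" where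
  "holomorphic_C2 h \<longleftrightarrow> continuous_on UNIV h
     \<and> (\<forall>w. (\<lambda>z. h (z, w)) holomorphic_on UNIV)
     \<and> (\<forall>z. (\<lambda>w. h (z, w)) holomorphic_on UNIV)"

text \<open>Products of elementary matrices of arbitrary
  types reduce to alternating ones (adjacent factors of equal type merge), so
  it suffices to consider alternating products, starting with either type.\<close>
definition factorizable ::
  "((complex \<times> complex \<Rightarrow> complex) \<Rightarrow> bool) \<Rightarrow> nat \<Rightarrow> (complex \<times> complex \<Rightarrow> complex^2^2) \<Rightarrow> bool" where
  "factorizable P N F \<longleftrightarrow> (\<exists>b hs. length hs = N \<and> (\<forall>h\<in>set hs. P h)
      \<and> (\<forall>x. F x = elprod b (map (\<lambda>h. h x) hs)))"

end

theory Submission imports Defs "HOL-Complex_Analysis.Complex_Analysis" begin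


definition mk :: "complex \<Rightarrow> complex \<Rightarrow> complex \<Rightarrow> complex \<Rightarrow> complex^2^2" where
  "mk a b c d = vector [vector [a, b], vector [c, d]]"

lemma mk_eq: "mk a b c d = mk a' b' c' d' \<longleftrightarrow> a = a' \<and> b = b' \<and> c = c' \<and> d = d'"
  unfolding mk_def by (auto simp: vec_eq_iff forall_2)

lemma mk_mult: "mk a b c d ** mk a' b' c' d' = mk (a*a' + b*c') (a*b' + b*d') (c*a' + d*c') (c*b' + d*d')"
  unfolding mk_def by (auto simp: vec_eq_iff forall_2 matrix_matrix_mult_def sum_2)

lemma mat1_mk: "mat 1 = mk 1 0 0 1"
  unfolding mk_def by (auto simp: vec_eq_iff forall_2 mat_def)

lemma upper_mk: "upper_el t = mk 1 t 0 1" unfolding upper_el_def mk_def ..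
lemma lower_mk: "lower_el t = mk 1 0 t 1" unfolding lower_el_def mk_def ..
lemma fmat_mk: "fmat (z,w) = mk (1 + z*w) (z^2) (- (w^2)) (1 - z*w)" unfolding fmat_def mk_def by simp



lemma no_log_circle:
  assumes contg: "continuous_on (sphere 0 1) g" and eq: "\<forall>x\<in>sphere (0::complex) 1. x = exp (g x)"
  shows False
proof -
  have "\<exists>g. continuous_on (sphere 0 1) g \<and> (\<forall>x\<in>sphere (0::complex) 1. id x = exp (\<i> * of_real (g x)))"
  proof (intro exI conjI)
    show "continuous_on (sphere 0 1) (Im \<circ> g)"
      by (intro contg continuous_intros continuous_on_compose)
    show "\<forall>x\<in>sphere (0::complex) 1. id x = exp (\<i> * complex_of_real ((Im \<circ> g) x))"
    proof
      fix x :: complex assume x: "x \<in> sphere 0 1"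
      then have "exp (Re (g x)) = 1" using eq by (metis mem_sphere_0 norm_exp_eq_Re)
      then have "Re (g x) = 0" by simp
      then have "g x = \<i> * of_real (Im (g x))" by (simp add: complex_eq_iff)
      then show "id x = exp (\<i> * complex_of_real ((Im \<circ> g) x))" using eq x by (metis comp_apply id_apply)
    qed
  qed
  then obtain a where "homotopic_with_canon (\<lambda>h. True) (sphere 0 1) (sphere (0::complex) 1) id (\<lambda>t. a)"
    using inessential_eq_continuous_logarithm_circle by blast
  then have "contractible (sphere (0::complex) 1)" unfolding contractible_def by blast
  then show False using contractible_sphere[of "0::complex" 1] by simp
qed

lemma no_log_pow:
  assumes n: "n \<ge> 1" and k: "k \<noteq> 0" and contg: "continuous_on (sphere 0 1) g"
    and eq: "\<forall>x\<in>sphere (0::complex) 1. k * x ^ n = exp (g x)"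
  shows False
proof -
  define h where "h x = exp (g x / of_nat n) / x" for x
  have nz: "x \<in> sphere 0 1 \<Longrightarrow> x \<noteq> 0" for x :: complex by auto
  have conth: "continuous_on (sphere 0 1) h" unfolding h_def
    using n by (intro continuous_intros contg) auto
  have hp: "h x ^ n = k" if "x \<in> sphere 0 1" for x
  proof -
    have "h x ^ n = exp (g x / of_nat n) ^ n / x ^ n" by (simp add: h_def power_divide)
    also have "exp (g x / of_nat n) ^ n = exp (of_nat n * (g x / of_nat n))" by (rule exp_of_nat_mult[symmetric])
    also have "\<dots> = exp (g x)" using n by simp
    finally show ?thesis using eq that nz[OF that] by (metis nonzero_mult_div_cancel_right power_not_zero)
  qed
  have "finite (h ` sphere 0 1)"
    by (rule finite_subset[OF _ finite_nth_roots[of n k]]) (use n hp in auto)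
  then have "h constant_on sphere 0 1"
    by (intro continuous_finite_range_constant conth connected_sphere) auto
  then obtain c where c: "\<And>x. x \<in> sphere 0 1 \<Longrightarrow> h x = c" unfolding constant_on_def by blast
  have "1 \<in> sphere (0::complex) 1" by simp
  then have "c \<noteq> 0" using c[of 1] hp[of 1] k n by (metis power_0_left less_le_trans not_one_le_zero zero_less_one)
  show False
  proof (rule no_log_circle)
    show "continuous_on (sphere 0 1) (\<lambda>x. g x / of_nat n - Ln c)"
      using n by (intro continuous_intros contg) auto
    show "\<forall>x\<in>sphere 0 1. x = exp (g x / of_nat n - Ln c)"
    proof
      fix x :: complex assume x: "x \<in> sphere 0 1"
      have "exp (g x / of_nat n - Ln c) = exp (g x / of_nat n) / c"
        using \<open>c \<noteq> 0\<close> by (simp add: exp_diff)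
      also have "\<dots> = x" using c[OF x] nz[OF x] \<open>c \<noteq> 0\<close> unfolding h_def by (auto simp: field_simps)
      finally show "x = exp (g x / of_nat n - Ln c)" by simp
    qed
  qed
qed

lemma no_ext_pow:
  assumes n: "n \<ge> 1" and k: "k \<noteq> 0" and contf: "continuous_on (cball 0 1) f"
    and nz: "\<And>u. u \<in> cball 0 1 \<Longrightarrow> f u \<noteq> 0"
    and eq: "\<And>u. u \<in> sphere (0::complex) 1 \<Longrightarrow> f u = k * u ^ n"
  shows False
proof -
  obtain g where g: "continuous_on (cball 0 1) g" "\<And>z. z \<in> cball 0 1 \<Longrightarrow> f z = exp (g z)"
    using continuous_logarithm_on_cball[OF contf nz] by blast
  show False
  proof (rule no_log_pow[OF n k, of g])
    show "continuous_on (sphere 0 1) g" using g(1) continuous_on_subset sphere_cball by blast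
    show "\<forall>x\<in>sphere 0 1. k * x ^ n = exp (g x)" using g(2) eq sphere_cball by (metis subsetD)
  qed
qed

lemma no_ext_cnj_pow:
  assumes n: "n \<ge> 1" and k: "k \<noteq> 0" and contf: "continuous_on (cball 0 1) f"
    and nz: "\<And>u. u \<in> cball 0 1 \<Longrightarrow> f u \<noteq> 0"
    and eq: "\<And>u. u \<in> sphere (0::complex) 1 \<Longrightarrow> f u = k * cnj u ^ n"
  shows False
proof (rule no_ext_pow[OF n k, of "\<lambda>u. f (cnj u)"])
  show "continuous_on (cball 0 1) (\<lambda>u. f (cnj u))"
    by (rule continuous_on_compose2[OF contf]) (auto intro: continuous_intros)
qed (auto simp: nz eq)



lemma cont_comp_disk:
  assumes "continuous_on UNIV (B :: complex \<times> complex \<Rightarrow> complex)"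
  shows "continuous_on S (\<lambda>u. B (u, cnj u))"
  by (rule continuous_on_compose2[OF assms]) (auto intro!: continuous_intros)

lemma sphere_mult_cnj: "u \<in> sphere (0::complex) 1 \<Longrightarrow> u * cnj u = 1"
  using complex_norm_square[of u] by simp

lemma mult_cnj_nz: "u \<noteq> 0 \<Longrightarrow> u * cnj (u::complex) \<noteq> 0"
  by simp

lemma common_zero:
  fixes B C :: "complex \<times> complex \<Rightarrow> complex"
  assumes cB: "continuous_on UNIV B" and cC: "continuous_on UNIV C"
    and prod: "\<And>z w. B (z,w) * C (z,w) = - (z*w)"
    and bd: "\<And>z w. z*w = 1 \<Longrightarrow> C (z,w) = z^2 \<and> B (z,w) = - (w^2)"
  shows "\<exists>x. B x = 0 \<and> C x = 0"
proof (rule ccontr)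
  assume nc: "\<not> ?thesis"
  have nzB: "B (u, cnj u) \<noteq> 0" and nzC: "C (u, cnj u) \<noteq> 0" if "u \<noteq> 0" for u
    using prod[of u "cnj u"] that by auto
  show False
  proof (cases "B (0,0) = 0")
    case False
    show False
    proof (rule no_ext_cnj_pow[of 2 "-1" "\<lambda>u. B (u, cnj u)"])
      show "continuous_on (cball 0 1) (\<lambda>u. B (u, cnj u))" by (rule cont_comp_disk[OF cB])
      show "B (u, cnj u) \<noteq> 0" for u using nzB[of u] False by (cases "u = 0") auto
      show "B (u, cnj u) = - 1 * cnj u ^ 2" if "u \<in> sphere 0 1" for u
        using bd[OF sphere_mult_cnj[OF that]] by simp
    qed auto
  next
    case True
    then have C0: "C (0,0) \<noteq> 0" using nc by auto
    show False
    proof (rule no_ext_pow[of 2 1 "\<lambda>u. C (u, cnj u)"])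
      show "continuous_on (cball 0 1) (\<lambda>u. C (u, cnj u))" by (rule cont_comp_disk[OF cC])
      show "C (u, cnj u) \<noteq> 0" for u using nzC[of u] C0 by (cases "u = 0") auto
      show "C (u, cnj u) = 1 * u ^ 2" if "u \<in> sphere 0 1" for u
        using bd[OF sphere_mult_cnj[OF that]] by simp
    qed auto
  qed
qed

lemma deriv_prod_nz:
  assumes f: "f holomorphic_on UNIV" and g: "g holomorphic_on UNIV"
    and eq: "\<And>v. f v * g v = k * v" and k: "k \<noteq> 0"
  shows "f 0 \<noteq> 0 \<or> g 0 \<noteq> 0"
proof (rule ccontr)
  assume "\<not> ?thesis"
  then have f0: "f 0 = 0" and g0: "g 0 = 0" by auto
  have "f field_differentiable at 0" using f holomorphic_on_imp_differentiable_at by blast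
  then obtain f' where f': "(f has_field_derivative f') (at 0)" using field_differentiable_def by blast
  have "g field_differentiable at 0" using g holomorphic_on_imp_differentiable_at by blast
  then obtain g' where g': "(g has_field_derivative g') (at 0)" using field_differentiable_def by blast
  have "((\<lambda>v. f v * g v) has_field_derivative f' * g 0 + g' * f 0) (at 0)"
    by (rule DERIV_mult[OF f' g'])
  then have d1: "((\<lambda>v. k * v) has_field_derivative 0) (at 0)" using f0 g0 eq by simp
  have d2: "((\<lambda>v. k * v) has_field_derivative k) (at 0)"
    by (auto intro!: derivative_eq_intros)
  show False using DERIV_unique[OF d1 d2] k by simp
qed

lemma connected_punct: "connected (- {0::complex})"
  by (intro path_connected_imp_connected path_connected_punctured_universe) simp

lemma dichotomy:
  fixes X Y :: "complex \<Rightarrow> complex"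
  assumes cX: "continuous_on UNIV X" and cY: "continuous_on UNIV Y"
    and z: "\<And>v. X v * Y v = 0" and nb: "\<And>v. v \<noteq> 0 \<Longrightarrow> X v \<noteq> 0 \<or> Y v \<noteq> 0"
  shows "(\<forall>v. v \<noteq> 0 \<longrightarrow> X v \<noteq> 0) \<or> (\<forall>v. v \<noteq> 0 \<longrightarrow> Y v \<noteq> 0)"
proof -
  let ?S = "- {0::complex}"
  have c1: "closedin (top_of_set ?S) {v \<in> ?S. X v = 0}"
    by (rule continuous_closedin_preimage_constant) (rule continuous_on_subset[OF cX], auto)
  have c2: "closedin (top_of_set ?S) {v \<in> ?S. Y v = 0}"
    by (rule continuous_closedin_preimage_constant) (rule continuous_on_subset[OF cY], auto)
  have un: "{v \<in> ?S. X v = 0} \<union> {v \<in> ?S. Y v = 0} = ?S" using z by auto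
  have di: "{v \<in> ?S. X v = 0} \<inter> {v \<in> ?S. Y v = 0} = {}" using nb by auto
  have "\<not> ({v \<in> ?S. X v = 0} \<noteq> {} \<and> {v \<in> ?S. Y v = 0} \<noteq> {})"
    using connected_punct[unfolded connected_closedin_eq] c1 c2 un di by blast
  then show ?thesis by auto
qed



definition Gam :: "complex \<Rightarrow> complex \<times> complex" where
  "Gam u = (u, cnj u + of_real (1 - (norm u)^2))"

lemma Gam_nz: "Gam u \<noteq> (0,0)"
  by (simp add: Gam_def)

lemma Gam_sphere: "u \<in> sphere 0 1 \<Longrightarrow> Gam u = (u, cnj u)"
  by (simp add: Gam_def)

lemma Gam_cont: "continuous_on S Gam"
  unfolding Gam_def by (intro continuous_intros)

lemma ext_via_Gam:
  assumes "continuous_on (- {(0,0)}) E" "\<And>x. x \<noteq> (0,0) \<Longrightarrow> E x \<noteq> (0::complex)"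
  shows "continuous_on (cball 0 1) (\<lambda>u. E (Gam u))" "\<And>u. E (Gam u) \<noteq> 0"
proof -
  show "continuous_on (cball 0 1) (\<lambda>u. E (Gam u))"
  proof (rule continuous_on_compose2[OF assms(1) Gam_cont])
    show "Gam ` cball 0 1 \<subseteq> - {(0, 0)}" using Gam_nz by (auto simp: eq_commute)
  qed
  show "\<And>u. E (Gam u) \<noteq> 0" using assms(2) Gam_nz by blast
qed

definition EE :: "(complex \<times> complex \<Rightarrow> complex) \<Rightarrow> (complex \<times> complex \<Rightarrow> complex) \<Rightarrow> complex \<times> complex \<Rightarrow> complex" where
  "EE X Y x = (X x * cnj (snd x) - fst x * cnj (Y x)) / of_real ((norm (snd x))^2 + (norm (Y x))^2)"

lemma EE_facts:
  fixes X Y :: "complex \<times> complex \<Rightarrow> complex"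
  assumes cX: "continuous_on UNIV X" and cY: "continuous_on UNIV Y"
    and prod: "\<And>z w. X (z,w) * Y (z,w) = - (z*w)"
    and nX: "\<And>z w. w \<noteq> 0 \<Longrightarrow> X (z,w) \<noteq> 0" and nY: "\<And>z w. z \<noteq> 0 \<Longrightarrow> Y (z,w) \<noteq> 0"
  shows "continuous_on (- {(0,0)}) (EE X Y)" "\<And>x. x \<noteq> (0,0) \<Longrightarrow> EE X Y x \<noteq> 0"
proof -
  have D: "(norm (snd x))^2 + (norm (Y x))^2 > 0" if "x \<noteq> (0,0)" for x
  proof (cases "snd x = 0")
    case True
    then have "fst x \<noteq> 0" using that by (cases x) auto
    then have "Y x \<noteq> 0" using nY[of "fst x" "snd x"] by simp
    then show ?thesis by (simp add: add_nonneg_pos)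
  next
    case False then show ?thesis by (simp add: add_pos_nonneg)
  qed
  show "continuous_on (- {(0,0)}) (EE X Y)"
    unfolding EE_def
  proof (rule continuous_on_divide)
    show "continuous_on (- {(0, 0)}) (\<lambda>x. X x * cnj (snd x) - fst x * cnj (Y x))"
      by (intro continuous_intros continuous_on_subset[OF cX] continuous_on_subset[OF cY]) auto
    show "continuous_on (- {(0, 0)}) (\<lambda>x. complex_of_real ((cmod (snd x))\<^sup>2 + (cmod (Y x))\<^sup>2))"
      by (intro continuous_intros continuous_on_subset[OF cX] continuous_on_subset[OF cY]) auto
    show "\<forall>x\<in>- {(0, 0)}. complex_of_real ((cmod (snd x))\<^sup>2 + (cmod (Y x))\<^sup>2) \<noteq> 0"
    proof
      fix x :: "complex \<times> complex" assume "x \<in> - {(0,0)}"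
      then have "(cmod (snd x))\<^sup>2 + (cmod (Y x))\<^sup>2 > 0" using D by auto
      then show "complex_of_real ((cmod (snd x))\<^sup>2 + (cmod (Y x))\<^sup>2) \<noteq> 0"
        by (metis of_real_eq_0_iff order_less_irrefl)
    qed
  qed
  show "EE X Y x \<noteq> 0" if x: "x \<noteq> (0,0)" for x
  proof
    assume "EE X Y x = 0"
    obtain z w where xe: "x = (z,w)" by (cases x)
    let ?D = "(norm w)^2 + (norm (Y (z,w)))^2"
    have Dp: "?D > 0" using D[OF x] xe by simp
    have N: "X (z,w) * cnj w - z * cnj (Y (z,w)) = 0"
      using \<open>EE X Y x = 0\<close> Dp xe unfolding EE_def by (auto simp del: of_real_add)
    have "Y (z,w) * (X (z,w) * cnj w - z * cnj (Y (z,w))) = - z * (w * cnj w + Y (z,w) * cnj (Y (z,w)))"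
      using prod[of z w] by (simp add: algebra_simps)
    also have "w * cnj w + Y (z,w) * cnj (Y (z,w)) = of_real ?D"
      by (simp only: of_real_add complex_norm_square)
    finally have "z * of_real ?D = 0" using N by simp
    then have z0: "z = 0" using Dp by (metis mult_eq_0_iff of_real_eq_0_iff order_less_irrefl)
    then have w0: "w \<noteq> 0" using x xe by simp
    then show False using N z0 nX[OF w0, of z] by simp
  qed
qed

lemma holo_core:
  fixes B C :: "complex \<times> complex \<Rightarrow> complex"
  assumes hB: "holomorphic_C2 B" and hC: "holomorphic_C2 C"
    and prod: "\<And>z w. B (z,w) * C (z,w) = - (z*w)"
    and bd: "\<And>z w. z*w = 1 \<Longrightarrow> C (z,w) = z^2 \<and> B (z,w) = - (w^2)"
  shows False
proof -
  have cB: "continuous_on UNIV B" and cC: "continuous_on UNIV C"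
    using hB hC unfolding holomorphic_C2_def by auto
  have hBz: "(\<lambda>z. B (z, w)) holomorphic_on UNIV" and hCz: "(\<lambda>z. C (z, w)) holomorphic_on UNIV"
    and hBw: "(\<lambda>w. B (z, w)) holomorphic_on UNIV" and hCw: "(\<lambda>w. C (z, w)) holomorphic_on UNIV" for z w
    using hB hC unfolding holomorphic_C2_def by auto
  have P: "(\<forall>w. w \<noteq> 0 \<longrightarrow> B (0,w) \<noteq> 0) \<or> (\<forall>w. w \<noteq> 0 \<longrightarrow> C (0,w) \<noteq> 0)"
  proof (rule dichotomy[of "\<lambda>w. B (0,w)" "\<lambda>w. C (0,w)"])
    show "continuous_on UNIV (\<lambda>w. B (0, w))"
      by (rule continuous_on_compose2[OF cB]) (auto intro!: continuous_intros)
    show "continuous_on UNIV (\<lambda>w. C (0, w))"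
      by (rule continuous_on_compose2[OF cC]) (auto intro!: continuous_intros)
    show "B (0, v) * C (0, v) = 0" for v using prod[of 0 v] by simp
    show "B (0, v) \<noteq> 0 \<or> C (0, v) \<noteq> 0" if "v \<noteq> 0" for v
    proof -
      have "(\<lambda>z. B (z, v)) 0 \<noteq> 0 \<or> (\<lambda>z. C (z, v)) 0 \<noteq> 0"
        by (rule deriv_prod_nz[where k="-v"]) (use hBz hCz prod that in \<open>auto simp: mult.commute\<close>)
      then show ?thesis by simp
    qed
  qed
  have Q: "(\<forall>z. z \<noteq> 0 \<longrightarrow> B (z,0) \<noteq> 0) \<or> (\<forall>z. z \<noteq> 0 \<longrightarrow> C (z,0) \<noteq> 0)"
  proof (rule dichotomy[of "\<lambda>z. B (z,0)" "\<lambda>z. C (z,0)"])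
    show "continuous_on UNIV (\<lambda>z. B (z, 0))"
      by (rule continuous_on_compose2[OF cB]) (auto intro!: continuous_intros)
    show "continuous_on UNIV (\<lambda>z. C (z, 0))"
      by (rule continuous_on_compose2[OF cC]) (auto intro!: continuous_intros)
    show "B (v, 0) * C (v, 0) = 0" for v using prod[of v 0] by simp
    show "B (v, 0) \<noteq> 0 \<or> C (v, 0) \<noteq> 0" if "v \<noteq> 0" for v
    proof -
      have "(\<lambda>w. B (v, w)) 0 \<noteq> 0 \<or> (\<lambda>w. C (v, w)) 0 \<noteq> 0"
        by (rule deriv_prod_nz[where k="-v"]) (use hBw hCw prod that in \<open>auto\<close>)
      then show ?thesis by simp
    qed
  qed
  have gB: "B (z,w) \<noteq> 0" and gC: "C (z,w) \<noteq> 0" if "z \<noteq> 0" "w \<noteq> 0" for z w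
    using prod[of z w] that by auto
  have sB: "B (u, cnj u) = - (cnj u ^ 2)" and sC: "C (u, cnj u) = u^2" if "u \<in> sphere 0 1" for u
    using bd[OF sphere_mult_cnj[OF that]] by auto
  consider "\<forall>w. w \<noteq> 0 \<longrightarrow> B (0,w) \<noteq> 0" "\<forall>z. z \<noteq> 0 \<longrightarrow> B (z,0) \<noteq> 0"
    | "\<forall>w. w \<noteq> 0 \<longrightarrow> C (0,w) \<noteq> 0" "\<forall>z. z \<noteq> 0 \<longrightarrow> C (z,0) \<noteq> 0"
    | "\<forall>w. w \<noteq> 0 \<longrightarrow> C (0,w) \<noteq> 0" "\<forall>z. z \<noteq> 0 \<longrightarrow> B (z,0) \<noteq> 0"
    | "\<forall>w. w \<noteq> 0 \<longrightarrow> B (0,w) \<noteq> 0" "\<forall>z. z \<noteq> 0 \<longrightarrow> C (z,0) \<noteq> 0"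
    using P Q by blast
  then show False
  proof cases
    case 1
    have nz: "B x \<noteq> 0" if "x \<noteq> (0,0)" for x
      using 1 gB that by (cases x) (metis)
    have e: "continuous_on (- {(0,0)}) B" by (rule continuous_on_subset[OF cB]) auto
    show False
    proof (rule no_ext_cnj_pow[of 2 "-1" "\<lambda>u. B (Gam u)"])
      show "continuous_on (cball 0 1) (\<lambda>u. B (Gam u))" "\<And>u. B (Gam u) \<noteq> 0"
        using ext_via_Gam[OF e nz] by auto
      show "B (Gam u) = - 1 * cnj u ^ 2" if "u \<in> sphere 0 1" for u
        using sB[OF that] Gam_sphere[OF that] by simp
    qed auto
  next
    case 2
    have nz: "C x \<noteq> 0" if "x \<noteq> (0,0)" for x
      using 2 gC that by (cases x) (metis)
    have e: "continuous_on (- {(0,0)}) C" by (rule continuous_on_subset[OF cC]) auto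
    show False
    proof (rule no_ext_pow[of 2 1 "\<lambda>u. C (Gam u)"])
      show "continuous_on (cball 0 1) (\<lambda>u. C (Gam u))" "\<And>u. C (Gam u) \<noteq> 0"
        using ext_via_Gam[OF e nz] by auto
      show "C (Gam u) = 1 * u ^ 2" if "u \<in> sphere 0 1" for u
        using sC[OF that] Gam_sphere[OF that] by simp
    qed auto
  next
    case 3
    have nX: "C (z,w) \<noteq> 0" if "w \<noteq> 0" for z w using 3 gC that by (cases "z = 0") auto
    have nY: "B (z,w) \<noteq> 0" if "z \<noteq> 0" for z w using 3 gB that by (cases "w = 0") auto
    have prod': "C (z,w) * B (z,w) = - (z*w)" for z w using prod[of z w] by (simp add: mult.commute)
    note F = EE_facts[OF cC cB prod' nX nY]
    show False
    proof (rule no_ext_pow[of 3 1 "\<lambda>u. EE C B (Gam u)"])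
      show "continuous_on (cball 0 1) (\<lambda>u. EE C B (Gam u))" "\<And>u. EE C B (Gam u) \<noteq> 0"
        using ext_via_Gam[OF F] by auto
      show "EE C B (Gam u) = 1 * u ^ 3" if u: "u \<in> sphere 0 1" for u
      proof -
        have n1: "norm u = 1" using u by simp
        have "EE C B (Gam u) = (u^2 * u + u * u^2) / of_real (1 + 1)"
          using sB[OF u] sC[OF u] Gam_sphere[OF u] n1 unfolding EE_def by (simp add: norm_power)
        then show ?thesis by (simp add: power3_eq_cube power2_eq_square)
      qed
    qed auto
  next
    case 4
    have nX: "B (z,w) \<noteq> 0" if "w \<noteq> 0" for z w using 4 gB that by (cases "z = 0") auto
    have nY: "C (z,w) \<noteq> 0" if "z \<noteq> 0" for z w using 4 gC that by (cases "w = 0") auto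
    note F = EE_facts[OF cB cC prod nX nY]
    show False
    proof (rule no_ext_cnj_pow[of 1 "-1" "\<lambda>u. EE B C (Gam u)"])
      show "continuous_on (cball 0 1) (\<lambda>u. EE B C (Gam u))" "\<And>u. EE B C (Gam u) \<noteq> 0"
        using ext_via_Gam[OF F] by auto
      show "EE B C (Gam u) = - 1 * cnj u ^ 1" if u: "u \<in> sphere 0 1" for u
      proof -
        have n1: "norm u = 1" using u by simp
        have uc: "u * cnj u = 1" using sphere_mult_cnj[OF u] .
        have "EE B C (Gam u) = (- (cnj u ^ 2) * u - u * cnj u ^ 2) / of_real (1 + 1)"
          using sB[OF u] sC[OF u] Gam_sphere[OF u] n1 unfolding EE_def by (simp add: norm_power)
        also have "\<dots> = - (cnj u * (u * cnj u))" by (simp add: power2_eq_square field_simps)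
        finally show ?thesis using uc by simp
      qed
    qed auto
  qed
qed



lemma elprod4: "elprod bb [a,b,c,d] = (if bb then upper_el a ** lower_el b ** upper_el c ** lower_el d
   else lower_el a ** upper_el b ** lower_el c ** upper_el d)"
  by (simp add: upper_mk lower_mk mk_mult mat1_mk matrix_mul_assoc)

lemma elprod3: "elprod bb [a,b,c] = (if bb then upper_el a ** lower_el b ** upper_el c
   else lower_el a ** upper_el b ** lower_el c)"
  by (simp add: upper_mk lower_mk mk_mult mat1_mk matrix_mul_assoc)

lemma ULUL_prod: "upper_el a ** lower_el b ** upper_el c ** lower_el d
   = mk (1 + a*b + (a+c+a*b*c)*d) (a+c+a*b*c) (b + (1+b*c)*d) (1+b*c)"
  by (simp add: upper_mk lower_mk mk_mult mk_eq algebra_simps)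

lemma LULU_prod: "lower_el a ** upper_el b ** lower_el c ** upper_el d
   = mk (1 + b*c) (b + (1+b*c)*d) (a+c+a*b*c) (1 + a*b + (a+c+a*b*c)*d)"
  by (simp add: upper_mk lower_mk mk_mult mk_eq algebra_simps)

lemma ULU_prod: "upper_el a ** lower_el b ** upper_el c = mk (1 + a*b) (a + c + a*b*c) b (1 + b*c)"
  by (simp add: upper_mk lower_mk mk_mult mk_eq algebra_simps)

lemma LUL_prod: "lower_el a ** upper_el b ** lower_el c = mk (1 + b*c) b (a + c + a*b*c) (1 + a*b)"
  by (simp add: upper_mk lower_mk mk_mult mk_eq algebra_simps)

lemma ULUL_eqs:
  assumes "fmat (z,w) = upper_el a ** lower_el b ** upper_el c ** lower_el d"
  shows "b*c = -(z*w) \<and> (z*w = 1 \<longrightarrow> c = z^2 \<and> b = -(w^2))"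
proof -
  from assms have e: "1 + z*w = 1 + a*b + (a+c+a*b*c)*d" "z^2 = a+c+a*b*c"
     "-(w^2) = b + (1+b*c)*d" "1 - z*w = 1+b*c"
    unfolding ULUL_prod fmat_mk mk_eq by blast+
  then have bc: "b*c = -(z*w)" by simp
  moreover have "z*w = 1 \<longrightarrow> c = z^2 \<and> b = -(w^2)"
  proof
    assume "z*w = 1"
    then have "1 + b*c = 0" using bc by simp
    moreover have "a+c+a*b*c = c + a*(1+b*c)" by (simp add: algebra_simps)
    ultimately show "c = z^2 \<and> b = -(w^2)" using e(2,3) by simp
  qed
  ultimately show ?thesis by blast
qed

lemma LULU_eqs:
  assumes "fmat (z,w) = lower_el a ** upper_el b ** lower_el c ** upper_el d"
  shows "b*c = z*w \<and> (z*w = -1 \<longrightarrow> b = z^2 \<and> c = -(w^2))"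
proof -
  from assms have e: "1 + z*w = 1 + b*c" "z^2 = b + (1+b*c)*d"
     "-(w^2) = a+c+a*b*c" "1 - z*w = 1 + a*b + (a+c+a*b*c)*d"
    unfolding LULU_prod fmat_mk mk_eq by blast+
  then have bc: "b*c = z*w" by simp
  moreover have "z*w = -1 \<longrightarrow> b = z^2 \<and> c = -(w^2)"
  proof
    assume "z*w = -1"
    then have "1 + b*c = 0" using bc by simp
    moreover have "a+c+a*b*c = c + a*(1+b*c)" by (simp add: algebra_simps)
    ultimately show "b = z^2 \<and> c = -(w^2)" using e(2,3) by simp
  qed
  ultimately show ?thesis by blast
qed



lemma punct_const:
  fixes g :: "complex \<Rightarrow> complex"
  assumes cg: "continuous_on UNIV g" and eq: "\<And>w. w \<noteq> 0 \<Longrightarrow> g w = c" and ne: "g 0 \<noteq> c"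
  shows False
proof -
  have "(g \<longlongrightarrow> g 0) (at 0)" using cg by (simp add: continuous_on_def)
  moreover have "(g \<longlongrightarrow> c) (at 0)"
  proof (rule tendsto_eventually)
    show "\<forall>\<^sub>F x in at 0. g x = c" using eq by (auto simp: eventually_at_filter)
  qed
  ultimately have "g 0 = c" using tendsto_unique by (metis trivial_limit_at)
  then show False using ne by simp
qed

lemma len3: "length hs = 3 \<Longrightarrow> \<exists>a b c. hs = [a,b,c]"
  by (auto simp: numeral_eq_Suc length_Suc_conv)

lemma len4: "length hs = 4 \<Longrightarrow> \<exists>a b c d. hs = [a,b,c,d]"
  by (auto simp: numeral_eq_Suc length_Suc_conv)

lemma not_cont3: "\<not> factorizable (continuous_on UNIV) 3 fmat"
proof
  assume "factorizable (continuous_on UNIV) 3 fmat"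
  then obtain bb hs where len: "length hs = 3" and cont: "\<forall>h\<in>set hs. continuous_on UNIV h"
    and eq: "\<forall>x. fmat x = elprod bb (map (\<lambda>h. h x) hs)"
    unfolding factorizable_def by blast
  obtain h1 h2 h3 where hs: "hs = [h1,h2,h3]" using len3[OF len] by blast
  have c1: "continuous_on UNIV h1" and c3: "continuous_on UNIV h3" using cont hs by auto
  show False
  proof (cases bb)
    case True
    have e0: "fmat (z,w) = upper_el (h1 (z,w)) ** lower_el (h2 (z,w)) ** upper_el (h3 (z,w))" for z w
      using eq[rule_format, of "(z,w)"] True hs by (simp add: elprod3 matrix_mul_assoc)
    have e: "1 + z*w = 1 + h1 (z,w) * h2 (z,w) \<and> - (w^2) = h2 (z,w)" for z w
      using e0[of z w] unfolding ULU_prod fmat_mk mk_eq by blast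
    show False
    proof (rule punct_const[of "\<lambda>w. h1 (1,w) * w" "-1"])
      show "continuous_on UNIV (\<lambda>w. h1 (1,w) * w)"
        by (intro continuous_intros continuous_on_compose2[OF c1]) auto
      show "h1 (1,w) * w = -1" if "w \<noteq> 0" for w
      proof -
        have A: "w = h1 (1,w) * h2 (1,w)" "h2 (1,w) = -(w*w)" using e[of 1 w] by (auto simp: power2_eq_square)
        then have "w = - (h1 (1,w) * (w*w))" by simp
        then have "h1 (1,w) * (w*w) = - w" by (metis minus_minus)
        moreover have "w * (h1 (1,w) * w) = h1 (1,w) * (w*w)" by (simp add: ac_simps)
        ultimately have "w * (h1 (1,w) * w) = w * (-1)" by simp
        then show ?thesis using that by (metis mult_cancel_left)
      qed
    qed simp
  next
    case False
    have e0: "fmat (z,w) = lower_el (h1 (z,w)) ** upper_el (h2 (z,w)) ** lower_el (h3 (z,w))" for z w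
      using eq[rule_format, of "(z,w)"] False hs by (simp add: elprod3 matrix_mul_assoc)
    have e: "1 + z*w = 1 + h2 (z,w) * h3 (z,w) \<and> z^2 = h2 (z,w)" for z w
      using e0[of z w] unfolding LUL_prod fmat_mk mk_eq by blast
    show False
    proof (rule punct_const[of "\<lambda>z. h3 (z,1) * z" "1"])
      show "continuous_on UNIV (\<lambda>z. h3 (z,1) * z)"
        by (intro continuous_intros continuous_on_compose2[OF c3]) auto
      show "h3 (z,1) * z = 1" if "z \<noteq> 0" for z
      proof -
        have A: "z = h2 (z,1) * h3 (z,1)" "h2 (z,1) = z*z" using e[of z 1] by (auto simp: power2_eq_square)
        then have "z = (z*z) * h3 (z,1)" by simp
        moreover have "z * (h3 (z,1) * z) = (z*z) * h3 (z,1)" by (simp add: ac_simps)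
        ultimately have "z * (h3 (z,1) * z) = z * 1" by (metis mult_1_right)
        then show ?thesis using that by (metis mult_cancel_left)
      qed
    qed simp
  qed
qed

lemma part5:
  "\<forall>h1 h2 h3 h4 :: complex \<times> complex \<Rightarrow> complex.
     continuous_on UNIV h1 \<and> continuous_on UNIV h2 \<and>
     continuous_on UNIV h3 \<and> continuous_on UNIV h4 \<and>
     (\<forall>x. fmat x = upper_el (h1 x) ** lower_el (h2 x) ** upper_el (h3 x) ** lower_el (h4 x))
     \<longrightarrow> (\<exists>x. h2 x = 0 \<and> h3 x = 0)"
proof (intro allI impI, elim conjE)
  fix h1 h2 h3 h4 :: "complex \<times> complex \<Rightarrow> complex"
  assume c2: "continuous_on UNIV h2" and c3: "continuous_on UNIV h3"
    and eq: "\<forall>x. fmat x = upper_el (h1 x) ** lower_el (h2 x) ** upper_el (h3 x) ** lower_el (h4 x)"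
  show "\<exists>x. h2 x = 0 \<and> h3 x = 0"
  proof (rule common_zero[OF c2 c3])
    show "h2 (z,w) * h3 (z,w) = - (z*w)" for z w using ULUL_eqs eq by blast
    show "z*w = 1 \<Longrightarrow> h3 (z,w) = z^2 \<and> h2 (z,w) = - (w^2)" for z w using ULUL_eqs eq by blast
  qed
qed

lemma holo_flip:
  assumes "holomorphic_C2 h" shows "holomorphic_C2 (\<lambda>p. h (fst p, - snd p))"
proof -
  have c: "continuous_on UNIV h" and hz: "\<And>w. (\<lambda>z. h (z, w)) holomorphic_on UNIV"
    and hw: "\<And>z. (\<lambda>w. h (z, w)) holomorphic_on UNIV" using assms unfolding holomorphic_C2_def by auto
  show ?thesis unfolding holomorphic_C2_def
  proof (intro conjI allI)
    show "continuous_on UNIV (\<lambda>p. h (fst p, - snd p))"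
      by (rule continuous_on_compose2[OF c]) (auto intro!: continuous_intros)
    show "(\<lambda>z. h (fst (z, w), - snd (z, w))) holomorphic_on UNIV" for w using hz[of "-w"] by simp
    show "(\<lambda>w. h (fst (z, w), - snd (z, w))) holomorphic_on UNIV" for z
    proof -
      have "((\<lambda>w. h (z, w)) \<circ> uminus) holomorphic_on UNIV"
        by (rule holomorphic_on_compose) (auto intro: holomorphic_intros holomorphic_on_subset[OF hw])
      then show ?thesis by (simp add: o_def)
    qed
  qed
qed

lemma not_holo4: "\<not> factorizable holomorphic_C2 4 fmat"
proof
  assume "factorizable holomorphic_C2 4 fmat"
  then obtain bb hs where len: "length hs = 4" and hol: "\<forall>h\<in>set hs. holomorphic_C2 h"
    and eq: "\<forall>x. fmat x = elprod bb (map (\<lambda>h. h x) hs)"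
    unfolding factorizable_def by blast
  obtain h1 h2 h3 h4 where hs: "hs = [h1,h2,h3,h4]" using len4[OF len] by blast
  have H2: "holomorphic_C2 h2" and H3: "holomorphic_C2 h3" using hol hs by auto
  show False
  proof (cases bb)
    case True
    have e: "fmat (z,w) = upper_el (h1 (z,w)) ** lower_el (h2 (z,w)) ** upper_el (h3 (z,w)) ** lower_el (h4 (z,w))" for z w
      using eq[rule_format, of "(z,w)"] True hs by (simp add: elprod4 matrix_mul_assoc)
    show False
    proof (rule holo_core[OF H2 H3])
      show "h2 (z,w) * h3 (z,w) = - (z*w)" for z w using ULUL_eqs[OF e] by blast
      show "z*w = 1 \<Longrightarrow> h3 (z,w) = z^2 \<and> h2 (z,w) = - (w^2)" for z w using ULUL_eqs[OF e] by blast
    qed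
  next
    case False
    have e: "fmat (z,w) = lower_el (h1 (z,w)) ** upper_el (h2 (z,w)) ** lower_el (h3 (z,w)) ** upper_el (h4 (z,w))" for z w
      using eq[rule_format, of "(z,w)"] False hs by (simp add: elprod4 matrix_mul_assoc)
    show False
    proof (rule holo_core[OF holo_flip[OF H3] holo_flip[OF H2]])
      show "h3 (fst (z,w), - snd (z,w)) * h2 (fst (z,w), - snd (z,w)) = - (z*w)" for z w
        using LULU_eqs[OF e[of z "-w"]] by (simp add: mult.commute)
      show "z*w = 1 \<Longrightarrow> h2 (fst (z,w), - snd (z,w)) = z^2 \<and> h3 (fst (z,w), - snd (z,w)) = - (w^2)" for z w
        using LULU_eqs[OF e[of z "-w"]] by simp
    qed
  qed
qed



lemma alg4:
  fixes z w Z W R D :: complex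
  assumes R: "R \<noteq> 0" and D: "D \<noteq> 0" and R4: "R^4 = z*Z" and Dd: "D = R^3 + (1 - z*w)*(1 - Z*W)"
  shows "(-(w*Z)/(R*D)) * (z^2*D/R^3) = -(z*w)"
    and "-(z^2/R^3)*(1 - Z*W) + z^2*D/R^3 + (-(z^2/R^3)*(1 - Z*W))*(-(w*Z)/(R*D))*(z^2*D/R^3) = z^2"
    and "-(w*Z)/(R*D) + (1 + (-(w*Z)/(R*D)) * (z^2*D/R^3)) * (w*Z/(R*D) - w^2*(1-Z*W)/D) = -(w^2)"
    and "1 + (-(z^2/R^3)*(1 - Z*W))*(-(w*Z)/(R*D)) + z^2 * (w*Z/(R*D) - w^2*(1-Z*W)/D) = 1 + z*w"
proof -
  have R4': "z*Z = R*R^3" using R4 by (simp add: eval_nat_numeral)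
  have bc: "(-(w*Z)/(R*D)) * (z^2*D/R^3) = -(z*w)"
  proof -
    have "(-(w*Z)/(R*D)) * (z^2*D/R^3) = -(w*z)*(z*Z)/(R*R^3)" using R D by (simp add: field_simps power2_eq_square)
    also have "\<dots> = -(w*z)*(R*R^3)/(R*R^3)" by (simp only: R4')
    also have "\<dots> = -(z*w)" using R by (simp add: mult.commute)
    finally show ?thesis .
  qed
  show "(-(w*Z)/(R*D)) * (z^2*D/R^3) = -(z*w)" by (rule bc)
  show "-(z^2/R^3)*(1 - Z*W) + z^2*D/R^3 + (-(z^2/R^3)*(1 - Z*W))*(-(w*Z)/(R*D))*(z^2*D/R^3) = z^2"
  proof -
    have "(-(z^2/R^3)*(1 - Z*W))*(-(w*Z)/(R*D))*(z^2*D/R^3) = (-(z^2/R^3)*(1 - Z*W)) * (-(z*w))"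
      using bc by (metis mult.assoc)
    moreover have "-(z^2/R^3)*(1 - Z*W) + z^2*D/R^3 + (-(z^2/R^3)*(1 - Z*W)) * (-(z*w)) = z^2"
    proof -
      define q where "q = z^2/R^3"
      have e1: "z^2*D/R^3 = q*D" unfolding q_def by simp
      have "-(z^2/R^3)*(1 - Z*W) + z^2*D/R^3 + (-(z^2/R^3)*(1 - Z*W)) * (-(z*w))
          = -q*(1 - Z*W) + q*D + (-q*(1 - Z*W)) * (-(z*w))" unfolding e1 q_def by simp
      also have "\<dots> = q * (D - (1 - z*w)*(1 - Z*W))" by (simp add: algebra_simps)
      also have "\<dots> = (z^2/R^3) * (D - (1 - z*w)*(1 - Z*W))" unfolding q_def ..
      finally have "-(z^2/R^3)*(1 - Z*W) + z^2*D/R^3 + (-(z^2/R^3)*(1 - Z*W)) * (-(z*w))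
          = (z^2/R^3) * (D - (1 - z*w)*(1 - Z*W))" .
      also have "D - (1 - z*w)*(1 - Z*W) = R^3" using Dd by simp
      finally show ?thesis using R by simp
    qed
    ultimately show ?thesis by metis
  qed
  show "-(w*Z)/(R*D) + (1 + (-(w*Z)/(R*D)) * (z^2*D/R^3)) * (w*Z/(R*D) - w^2*(1-Z*W)/D) = -(w^2)"
  proof -
    have e: "-(w*Z)/(R*D) + (1 - z*w) * (w*Z/(R*D) - w^2*(1-Z*W)/D) = -(w^2)"
    proof -
      have "R*D*(-(w*Z)/(R*D) + (1 - z*w) * (w*Z/(R*D) - w^2*(1-Z*W)/D)) = -(w*Z) + (1 - z*w)*(w*Z - R*w^2*(1-Z*W))"
        using R D by (simp add: field_simps)
      also have "\<dots> = R*D*(-(w^2))"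
      proof -
        have "-(w*Z) + (1 - z*w)*(w*Z - R*w^2*(1-Z*W)) = -(w^2) * (z*Z + R*(1-z*w)*(1-Z*W))"
          by (simp add: algebra_simps power2_eq_square)
        also have "z*Z = R * R^3" using R4' .
        also have "R*R^3 + R*(1-z*w)*(1-Z*W) = R*D" unfolding Dd by (simp add: algebra_simps)
        finally show ?thesis by (simp add: ac_simps)
      qed
      finally show ?thesis using R D by (metis mult_cancel_left mult_eq_0_iff)
    qed
    then show ?thesis using bc by simp
  qed
  show "1 + (-(z^2/R^3)*(1 - Z*W))*(-(w*Z)/(R*D)) + z^2 * (w*Z/(R*D) - w^2*(1-Z*W)/D) = 1 + z*w"
  proof -
    have "R^3*D*((-(z^2/R^3)*(1 - Z*W))*(-(w*Z)/(R*D)) + z^2 * (w*Z/(R*D) - w^2*(1-Z*W)/D))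
        = (z*Z)*z*w*(1-Z*W)/R + z*Z*z*w*R^2 - R^3*z^2*w^2*(1-Z*W)"
      using R D by (simp add: field_simps power2_eq_square power3_eq_cube)
    also have "\<dots> = (R*R^3)*z*w*(1-Z*W)/R + (R*R^3)*z*w*R^2 - R^3*z^2*w^2*(1-Z*W)"
      by (simp only: R4')
    also have "\<dots> = R^3*z*w*(1-Z*W) + R^3*z*w*R^3 - R^3*z^2*w^2*(1-Z*W)"
      using R by (simp add: power2_eq_square power3_eq_cube)
    also have "\<dots> = R^3*D*(z*w)"
      unfolding Dd by (simp add: algebra_simps power2_eq_square)
    finally show ?thesis using R D by simp
  qed
qed



definition rr :: "complex \<times> complex \<Rightarrow> real" where "rr p = sqrt (cmod (fst p))"
definition DD :: "complex \<times> complex \<Rightarrow> real" where "DD p = rr p ^ 3 + (cmod (1 - fst p * snd p))^2"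
definition ca :: "complex \<times> complex \<Rightarrow> complex" where
  "ca p = -(fst p ^2 / of_real (rr p ^3)) * cnj (1 - fst p * snd p)"
definition cb :: "complex \<times> complex \<Rightarrow> complex" where
  "cb p = -(snd p * cnj (fst p)) / of_real (rr p * DD p)"
definition cc :: "complex \<times> complex \<Rightarrow> complex" where
  "cc p = fst p ^2 * of_real (DD p) / of_real (rr p ^ 3)"
definition cd1 :: "complex \<times> complex \<Rightarrow> complex" where
  "cd1 p = snd p * cnj (fst p) / of_real (rr p * DD p)"
definition cd :: "complex \<times> complex \<Rightarrow> complex" where
  "cd p = cd1 p - snd p ^2 * cnj (1 - fst p * snd p) / of_real (DD p)"

lemma cmod_cnj_aux [simp]: "cmod (1 - cnj a * cnj b) = cmod (1 - a*b)"
  by (metis complex_cnj_mult complex_cnj_one complex_cnj_diff complex_mod_cnj)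

lemma rr_nonneg: "rr p \<ge> 0" by (simp add: rr_def)
lemma rr_pos: "fst p \<noteq> 0 \<Longrightarrow> rr p > 0" by (simp add: rr_def)
lemma rr_sq: "rr p ^ 2 = cmod (fst p)" by (simp add: rr_def)
lemma rr_zero: "rr (0, w) = 0" by (simp add: rr_def)

lemma DD_pos: "DD p > 0"
proof (cases "fst p = 0")
  case True then show ?thesis by (simp add: DD_def rr_def)
next
  case False then have "rr p > 0" by (rule rr_pos)
  then show ?thesis unfolding DD_def by (simp add: add_pos_nonneg)
qed

lemma cont_rr: "continuous_on UNIV rr"
  unfolding rr_def by (intro continuous_intros)

lemma cont_DD: "continuous_on UNIV DD"
  unfolding DD_def rr_def by (intro continuous_intros)

lemma isCont_rr: "isCont rr x"
  using cont_rr continuous_on_eq_continuous_at by blast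

lemma isCont_DD: "isCont DD x"
  using cont_DD continuous_on_eq_continuous_at by blast

lemma cont_squeeze:
  fixes f :: "complex \<times> complex \<Rightarrow> complex" and g :: "complex \<times> complex \<Rightarrow> real"
  assumes c1: "\<And>x. fst x \<noteq> 0 \<Longrightarrow> isCont f x" and f0: "\<And>w. f (0,w) = 0"
    and cg: "continuous_on UNIV g" and g0: "\<And>w. g (0,w) = 0" and b: "\<And>p. norm (f p) \<le> g p"
  shows "continuous_on UNIV f"
  unfolding continuous_on_eq_continuous_at[OF open_UNIV]
proof (intro ballI)
  fix x :: "complex \<times> complex" assume "x \<in> UNIV"
  show "isCont f x"
  proof (cases "fst x = 0")
    case False then show ?thesis by (rule c1)
  next
    case True
    then obtain w where x: "x = (0,w)" by (cases x) auto
    have "isCont g x" using cg continuous_on_eq_continuous_at by blast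
    then have "(g \<longlongrightarrow> 0) (at x)" using g0 x by (simp add: isCont_def)
    then have "(f \<longlongrightarrow> 0) (at x)" by (intro Lim_null_comparison[of f g]) (auto simp: b)
    then show ?thesis using f0 x by (simp add: isCont_def)
  qed
qed

lemma cont_ca: "continuous_on UNIV ca"
proof (rule cont_squeeze[where g="\<lambda>p. rr p * cmod (1 - fst p * snd p)"])
  show "isCont ca x" if "fst x \<noteq> 0" for x
    unfolding ca_def using rr_pos[OF that]
    by (intro continuous_intros isCont_rr) auto
  show "ca (0, w) = 0" for w by (simp add: ca_def)
  show "continuous_on UNIV (\<lambda>p. rr p * cmod (1 - fst p * snd p))"
    by (intro continuous_intros cont_rr)
  show "rr (0, w) * cmod (1 - fst (0, w) * snd (0, w)) = 0" for w by (simp add: rr_zero)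
  show "norm (ca p) \<le> rr p * cmod (1 - fst p * snd p)" for p
  proof (cases "fst p = 0")
    case True then show ?thesis by (simp add: ca_def rr_nonneg)
  next
    case False
    have r: "rr p > 0" using rr_pos[OF False] .
    have "norm (ca p) = cmod (fst p) ^ 2 / rr p ^ 3 * cmod (1 - fst p * snd p)"
      unfolding ca_def using r by (simp add: norm_mult norm_divide norm_power)
    also have "cmod (fst p) ^ 2 / rr p ^ 3 = rr p" using r by (simp add: rr_sq[symmetric] field_simps eval_nat_numeral)
    finally show ?thesis by simp
  qed
qed

lemma norm_cb: "norm (cb p) = cmod (snd p) * rr p / DD p" and norm_cd1: "norm (cd1 p) = cmod (snd p) * rr p / DD p"
proof -
  have "cmod (snd p) * cmod (fst p) / (rr p * DD p) = cmod (snd p) * rr p / DD p"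
  proof (cases "fst p = 0")
    case True then show ?thesis by (simp add: rr_def)
  next
    case False
    have r: "rr p > 0" using rr_pos[OF False] .
    then show ?thesis using DD_pos[of p] by (simp add: rr_sq[symmetric] field_simps power2_eq_square)
  qed
  then show "norm (cb p) = cmod (snd p) * rr p / DD p" "norm (cd1 p) = cmod (snd p) * rr p / DD p"
    unfolding cb_def cd1_def using rr_nonneg[of p] DD_pos[of p]
    by (simp_all add: norm_mult norm_divide abs_mult)
qed

lemma cont_cb: "continuous_on UNIV cb"
proof (rule cont_squeeze[where g="\<lambda>p. cmod (snd p) * rr p / DD p"])
  show "isCont cb x" if "fst x \<noteq> 0" for x
    unfolding cb_def using rr_pos[OF that] DD_pos[of x]
    by (intro continuous_intros isCont_rr isCont_DD) auto
  show "cb (0, w) = 0" for w by (simp add: cb_def)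
  show "continuous_on UNIV (\<lambda>p. cmod (snd p) * rr p / DD p)"
    using DD_pos by (intro continuous_intros cont_rr cont_DD) (auto simp: less_le)
  show "cmod (snd (0, w)) * rr (0, w) / DD (0, w) = 0" for w by (simp add: rr_zero)
  show "norm (cb p) \<le> cmod (snd p) * rr p / DD p" for p by (simp add: norm_cb)
qed

lemma cont_cd1: "continuous_on UNIV cd1"
proof (rule cont_squeeze[where g="\<lambda>p. cmod (snd p) * rr p / DD p"])
  show "isCont cd1 x" if "fst x \<noteq> 0" for x
    unfolding cd1_def using rr_pos[OF that] DD_pos[of x]
    by (intro continuous_intros isCont_rr isCont_DD) auto
  show "cd1 (0, w) = 0" for w by (simp add: cd1_def)
  show "continuous_on UNIV (\<lambda>p. cmod (snd p) * rr p / DD p)"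
    using DD_pos by (intro continuous_intros cont_rr cont_DD) (auto simp: less_le)
  show "cmod (snd (0, w)) * rr (0, w) / DD (0, w) = 0" for w by (simp add: rr_zero)
  show "norm (cd1 p) \<le> cmod (snd p) * rr p / DD p" for p by (simp add: norm_cd1)
qed

lemma cont_cd: "continuous_on UNIV cd"
  unfolding cd_def using DD_pos
  by (intro continuous_intros cont_cd1 cont_DD) (auto simp: less_le)

lemma cont_cc: "continuous_on UNIV cc"
proof (rule cont_squeeze[where g="\<lambda>p. rr p * DD p"])
  show "isCont cc x" if "fst x \<noteq> 0" for x
    unfolding cc_def using rr_pos[OF that]
    by (intro continuous_intros isCont_rr isCont_DD) auto
  show "cc (0, w) = 0" for w by (simp add: cc_def)
  show "continuous_on UNIV (\<lambda>p. rr p * DD p)" by (intro continuous_intros cont_rr cont_DD)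
  show "rr (0, w) * DD (0, w) = 0" for w by (simp add: rr_zero)
  show "norm (cc p) \<le> rr p * DD p" for p
  proof (cases "fst p = 0")
    case True then show ?thesis using rr_nonneg[of p] DD_pos[of p] by (simp add: cc_def)
  next
    case False
    have r: "rr p > 0" using rr_pos[OF False] .
    have "norm (cc p) = cmod (fst p) ^ 2 / rr p ^ 3 * DD p"
      unfolding cc_def using r DD_pos[of p] by (simp add: norm_mult norm_divide norm_power)
    also have "cmod (fst p) ^ 2 / rr p ^ 3 = rr p" using r by (simp add: rr_sq[symmetric] field_simps eval_nat_numeral)
    finally show ?thesis by simp
  qed
qed



lemma cont4_pt: "fmat (z,w) = upper_el (ca (z,w)) ** lower_el (cb (z,w)) ** upper_el (cc (z,w)) ** lower_el (cd (z,w))"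
proof (cases "z = 0")
  case True
  then show ?thesis
    by (simp add: ULUL_prod fmat_mk mk_eq ca_def cb_def cc_def cd_def cd1_def DD_def rr_def)
next
  case False
  define R where "R = (of_real (rr (z,w)) :: complex)"
  define D where "D = (of_real (DD (z,w)) :: complex)"
  have r: "rr (z,w) > 0" using rr_pos[of "(z,w)"] False by simp
  have Rnz: "R \<noteq> 0" using r by (simp add: R_def)
  have Dnz: "D \<noteq> 0" using DD_pos[of "(z,w)"] by (simp add: D_def)
  have R4: "R^4 = z * cnj z"
  proof -
    have "rr (z,w) ^ 4 = (cmod z)^2" using rr_sq[of "(z,w)"] by (metis fst_conv power_mult numeral_Bit0 mult_2 power_even_eq)
    then have "R^4 = of_real ((cmod z)^2)" by (simp add: R_def flip: of_real_power)
    then show ?thesis by (simp only: complex_norm_square)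
  qed
  have Dd: "D = R^3 + (1 - z*w)*(1 - cnj z * cnj w)"
  proof -
    have "D = of_real (rr (z,w) ^ 3) + of_real ((cmod (1 - z*w))^2)" by (simp add: D_def DD_def)
    also have "of_real ((cmod (1 - z*w))^2) = (1 - z*w) * cnj (1 - z*w)" by (rule complex_norm_square)
    finally show ?thesis by (simp add: R_def)
  qed
  have a: "ca (z,w) = -(z^2/R^3)*(1 - cnj z * cnj w)" by (simp add: ca_def R_def)
  have b: "cb (z,w) = -(w*cnj z)/(R*D)" by (simp add: cb_def R_def D_def)
  have c: "cc (z,w) = z^2*D/R^3" by (simp add: cc_def R_def D_def)
  have d: "cd (z,w) = w*cnj z/(R*D) - w^2*(1-cnj z * cnj w)/D" by (simp add: cd_def cd1_def R_def D_def)
  note E = alg4[OF Rnz Dnz R4 Dd]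
  show ?thesis unfolding ULUL_prod fmat_mk mk_eq a b c d
  proof (intro conjI)
    show "1 + z*w = 1 + -(z^2/R^3)*(1 - cnj z * cnj w) * (-(w*cnj z)/(R*D)) +
      (-(z^2/R^3)*(1 - cnj z * cnj w) + z^2*D/R^3 + -(z^2/R^3)*(1 - cnj z * cnj w) * (-(w*cnj z)/(R*D)) * (z^2*D/R^3)) *
      (w*cnj z/(R*D) - w^2*(1-cnj z * cnj w)/D)"
      using E(2,4) by simp
    show "z^2 = -(z^2/R^3)*(1 - cnj z * cnj w) + z^2*D/R^3 + -(z^2/R^3)*(1 - cnj z * cnj w) * (-(w*cnj z)/(R*D)) * (z^2*D/R^3)"
      using E(2) by simp
    show "- (w^2) = -(w*cnj z)/(R*D) + (1 + -(w*cnj z)/(R*D) * (z^2*D/R^3)) * (w*cnj z/(R*D) - w^2*(1-cnj z * cnj w)/D)"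
      using E(3) by simp
    show "1 - z*w = 1 + -(w*cnj z)/(R*D) * (z^2*D/R^3)"
      using E(1) by simp
  qed
qed

lemma cont4: "factorizable (continuous_on UNIV) 4 fmat"
  unfolding factorizable_def
proof (intro exI[of _ True] exI[of _ "[ca, cb, cc, cd]"] conjI allI)
  show "\<forall>h\<in>set [ca, cb, cc, cd]. continuous_on UNIV h"
    using cont_ca cont_cb cont_cc cont_cd by simp
  show "fmat x = elprod True (map (\<lambda>h. h x) [ca, cb, cc, cd])" for x
    using cont4_pt[of "fst x" "snd x"] by (simp add: elprod4 matrix_mul_assoc)
qed simp



lemma alg5:
  fixes z w F E e e' :: complex
  assumes h1: "z*w*F = e - 1" and h2: "z*w*E = F - 1" and h3: "e*e' = 1"
  shows "1 + z * (w*F) = e"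
    and "-(w^2 + w*F)*e' + w*F + (-(w^2 + w*F)*e') * z * (w*F) = -(w^2)"
    and "z + (1 + z*(w*F)) * ((z^2 - z^2*E*(1 - z*w) - z)*e') = z^2 - z^2*E*(1 - z*w)"
    and "1 + (-(w^2 + w*F)*e') * z + (-(w^2)) * ((z^2 - z^2*E*(1 - z*w) - z)*e') = 1 - z*w"
    and "e + z^2*E*(-(w^2)) = 1 + z*w"
  using assms by algebra+



definition FF :: "complex \<Rightarrow> complex" where
  "FF t = (if t = 0 then deriv exp 0 else (exp t - exp 0)/(t - 0))"
definition EF :: "complex \<Rightarrow> complex" where
  "EF t = (if t = 0 then deriv FF 0 else (FF t - FF 0)/(t - 0))"

lemma FF_hol: "FF holomorphic_on UNIV"
  unfolding FF_def[abs_def] by (rule pole_lemma) (auto intro: holomorphic_intros)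

lemma EF_hol: "EF holomorphic_on UNIV"
  unfolding EF_def[abs_def] by (rule pole_lemma[OF FF_hol]) auto

lemma FF0: "FF 0 = 1"
  unfolding FF_def using DERIV_imp_deriv[OF DERIV_exp[of 0]] by simp

lemma FF_id: "t * FF t = exp t - 1"
  by (cases "t = 0") (auto simp: FF_def)

lemma EF_id: "t * EF t = FF t - 1"
  by (cases "t = 0") (auto simp: EF_def FF0)

lemma hol_comp: "\<phi> holomorphic_on UNIV \<Longrightarrow> g holomorphic_on S \<Longrightarrow> (\<lambda>z. \<phi> (g z)) holomorphic_on S"
  using holomorphic_on_compose[of g S \<phi>] holomorphic_on_subset by (auto simp: o_def)

lemma cont_comp2: "\<phi> holomorphic_on UNIV \<Longrightarrow> continuous_on UNIV (\<lambda>p::complex\<times>complex. \<phi> (fst p * snd p))"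
  by (rule continuous_on_compose2[OF holomorphic_on_imp_continuous_on]) (auto intro!: continuous_intros)

definition hx :: "complex \<times> complex \<Rightarrow> complex" where
  "hx p = fst p ^2 * EF (fst p * snd p)"
definition ha :: "complex \<times> complex \<Rightarrow> complex" where
  "ha p = -(snd p ^2 + snd p * FF (fst p * snd p)) * exp (-(fst p * snd p))"
definition hb :: "complex \<times> complex \<Rightarrow> complex" where
  "hb p = fst p"
definition hc :: "complex \<times> complex \<Rightarrow> complex" where
  "hc p = snd p * FF (fst p * snd p)"
definition hd :: "complex \<times> complex \<Rightarrow> complex" where
  "hd p = (fst p ^2 - fst p ^2 * EF (fst p * snd p) * (1 - fst p * snd p) - fst p) * exp (-(fst p * snd p))"

lemmas hol_facts = FF_hol EF_hol cont_comp2[OF FF_hol] cont_comp2[OF EF_hol]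
  hol_comp[OF FF_hol] hol_comp[OF EF_hol]

lemma hx_hol: "holomorphic_C2 hx"
  unfolding holomorphic_C2_def hx_def
  by (auto intro!: continuous_intros holomorphic_intros hol_facts)

lemma ha_hol: "holomorphic_C2 ha"
  unfolding holomorphic_C2_def ha_def
  by (auto intro!: continuous_intros holomorphic_intros hol_facts)

lemma hb_hol: "holomorphic_C2 hb"
  unfolding holomorphic_C2_def hb_def
  by (auto intro!: continuous_intros holomorphic_intros hol_facts)

lemma hc_hol: "holomorphic_C2 hc"
  unfolding holomorphic_C2_def hc_def
  by (auto intro!: continuous_intros holomorphic_intros hol_facts)

lemma hd_hol: "holomorphic_C2 hd"
  unfolding holomorphic_C2_def hd_def
  by (auto intro!: continuous_intros holomorphic_intros hol_facts)

lemma holo5_pt: "fmat (z,w) = upper_el (hx (z,w)) ** (lower_el (ha (z,w)) ** upper_el (hb (z,w)) ** lower_el (hc (z,w)) ** upper_el (hd (z,w)))"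
proof -
  define F where "F = FF (z*w)"
  define E where "E = EF (z*w)"
  define e where "e = exp (z*w)"
  define e' where "e' = exp (-(z*w))"
  have h1: "z*w*F = e - 1" using FF_id[of "z*w"] by (simp add: F_def e_def)
  have h2: "z*w*E = F - 1" using EF_id[of "z*w"] by (simp add: E_def F_def)
  have h3: "e * e' = 1" by (simp add: e_def e'_def exp_minus)
  note Q = alg5[OF h1 h2 h3]
  define a where "a = -(w^2 + w*F)*e'"
  define d where "d = (z^2 - z^2*E*(1 - z*w) - z)*e'"
  define g where "g = z^2 - z^2*E*(1 - z*w)"
  have A: "ha (z,w) = a" "hb (z,w) = z" "hc (z,w) = w*F" "hd (z,w) = d" "hx (z,w) = z^2 * E"
    by (simp_all add: ha_def hb_def hc_def hd_def hx_def a_def d_def F_def E_def e'_def)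
  have P21: "a + w*F + a*z*(w*F) = -(w^2)" using Q(2) unfolding a_def .
  have P: "lower_el a ** upper_el z ** lower_el (w*F) ** upper_el d = mk e g (-(w^2)) (1 - z*w)"
    unfolding LULU_prod mk_eq
  proof (intro conjI)
    show "1 + z*(w*F) = e" by (rule Q(1))
    show "z + (1 + z*(w*F))*d = g" using Q(3) unfolding d_def g_def .
    show "a + w*F + a*z*(w*F) = -(w^2)" by (rule P21)
    show "1 + a*z + (a + w*F + a*z*(w*F))*d = 1 - z*w" unfolding P21 using Q(4) unfolding a_def d_def .
  qed
  have "upper_el (z^2*E) ** mk e g (-(w^2)) (1 - z*w) = fmat (z,w)"
    unfolding fmat_mk upper_mk mk_mult mk_eq using Q(5) by (simp add: g_def algebra_simps)
  then show ?thesis unfolding A P by simp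
qed


lemma holo5: "factorizable holomorphic_C2 5 fmat"
  unfolding factorizable_def
proof (intro exI[of _ True] exI[of _ "[hx, ha, hb, hc, hd]"] conjI allI)
  show "\<forall>h\<in>set [hx, ha, hb, hc, hd]. holomorphic_C2 h"
    using hx_hol ha_hol hb_hol hc_hol hd_hol by simp
  show "fmat x = elprod True (map (\<lambda>h. h x) [hx, ha, hb, hc, hd])" for x
    using holo5_pt[of "fst x" "snd x"] by (simp add: matrix_mul_assoc)
qed simp

theorem proposition1:
  shows "factorizable (continuous_on UNIV) 4 fmat
       \<and> \<not> factorizable (continuous_on UNIV) 3 fmat
       \<and> factorizable holomorphic_C2 5 fmat
       \<and> \<not> factorizable holomorphic_C2 4 fmat
       \<and> (\<forall>h1 h2 h3 h4 :: complex \<times> complex \<Rightarrow> complex.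
            continuous_on UNIV h1 \<and> continuous_on UNIV h2 \<and>
            continuous_on UNIV h3 \<and> continuous_on UNIV h4 \<and>
            (\<forall>x. fmat x = upper_el (h1 x) ** lower_el (h2 x) ** upper_el (h3 x) ** lower_el (h4 x))
            \<longrightarrow> (\<exists>x. h2 x = 0 \<and> h3 x = 0))"
  using cont4 not_cont3 holo5 not_holo4 part5 by blast

end
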